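(* Let $p\ge 7$ be a prime and $k$ an integer with $(p+1)/2\le k\le p-3$. Then $\mathsf{BO}(k,\mathbb{Z}/p\mathbb{Z})=k+1$.
   Context: For a positive integer $k$, a set $\{g_1,\dots,g_k\}$ of $k$ distinct elements of a finite abelian group $G$ (written additively) is called $k$-barycentric if $\sum_{i=1}^k g_i = k\,g_j$ for some $1\le j\le k$. The $k$-th barycentric Olson constant $\mathsf{BO}(k,G)$ is the smallest integer $\ell$ such that every subset $A\subseteq G$ with $|A|\ge \ell$ contains a $k$-barycentric subset (so that always $\mathsf{BO}(k,G)\le |G|+1$). *)

theory Defs
  imports "HOL-Algebra.Algebra" "HOL-Number_Theory.Residues"
begin

text \<open>A finite abelian group G is given as a HOL-Algebra structure (group operation
  written as mult). For Z/pZ we use the additive group of residue_ring p.\<close>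

definition k_barycentric :: "('a, 'b) monoid_scheme \<Rightarrow> nat \<Rightarrow> 'a set \<Rightarrow> bool" where
  "k_barycentric G k S \<longleftrightarrow>
     S \<subseteq> carrier G \<and> finite S \<and> card S = k \<and>
     (\<exists>g\<in>S. finprod G (\<lambda>x. x) S = g [^]\<^bsub>G\<^esub> k)"

definition barycentric_olson :: "nat \<Rightarrow> ('a, 'b) monoid_scheme \<Rightarrow> nat" where
  "barycentric_olson k G =
     (LEAST l. \<forall>A. A \<subseteq> carrier G \<and> card A \<ge> l \<longrightarrow> (\<exists>S\<subseteq>A. k_barycentric G k S))"

end

theory Submission imports Defs begin

lemma res_sum:
  fixes p :: nat
  assumes "p > 1" "finite S" "S \<subseteq> {0..int p - 1}"
  shows "finprod (add_monoid (residue_ring (int p))) (\<lambda>x. x) S = (\<Sum>S) mod int p"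
proof -
  define R where "R = residue_ring (int p)"
  interpret residues "int p" R
    by unfold_locales (use assms in \<open>simp_all add: R_def\<close>)
  have "finprod (add_monoid R) (\<lambda>x. x) S = finsum R (\<lambda>i. i mod int p) S"
    unfolding finsum_def[symmetric]
    by (rule finsum_cong') (use assms in \<open>auto simp: res_carrier_eq Pi_def\<close>)
  also have "\<dots> = (\<Sum>S) mod int p" using sum_cong[OF assms(2), of id] by simp
  finally show ?thesis by (simp add: R_def)
qed

lemma res_pow:
  fixes p :: nat
  assumes "p > 1" "g \<in> {0..int p - 1}"
  shows "g [^]\<^bsub>add_monoid (residue_ring (int p))\<^esub> (n::nat) = (int n * g) mod int p"
proof -
  define R where "R = residue_ring (int p)"
  interpret residues "int p" R
    by unfold_locales (use assms in \<open>simp_all add: R_def\<close>)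
  have "g [^]\<^bsub>add_monoid R\<^esub> n = (int n * g) mod int p"
  proof (induction n)
    case 0 then show ?case by (simp add: R_def residue_ring_def)
  next
    case (Suc n)
    have "g [^]\<^bsub>add_monoid R\<^esub> Suc n = g [^]\<^bsub>add_monoid R\<^esub> n \<otimes>\<^bsub>add_monoid R\<^esub> g"
      by (rule Group.nat_pow_Suc)
    also have "\<dots> = ((int n * g) mod int p + g) mod int p" using Suc by (simp add: R_def residue_ring_def)
    also have "\<dots> = (int (Suc n) * g) mod int p" by (simp add: algebra_simps mod_add_right_eq)
    finally show ?case .
  qed
  then show ?thesis by (simp add: R_def)
qed

lemma cancel_mod:
  fixes p :: nat and a c c' :: int
  assumes "Factorial_Ring.prime p" "0 < a" "a < int p" "c \<in> {0..int p - 1}" "c' \<in> {0..int p - 1}"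
    "(a * c) mod int p = (a * c') mod int p"
  shows "c = c'"
proof -
  have pr: "Factorial_Ring.prime (int p)" using assms(1) by simp
  have "int p dvd a * (c - c')" using assms(6)
    by (metis mod_eq_dvd_iff right_diff_distrib)
  then have "int p dvd a \<or> int p dvd (c - c')" using pr Factorial_Ring.prime_dvd_mult_iff by blast
  moreover have "\<not> int p dvd a" using assms(2,3) zdvd_not_zless by blast
  ultimately have d: "int p dvd (c - c')" by blast
  show ?thesis
  proof (rule ccontr)
    assume "c \<noteq> c'"
    then have "\<bar>int p\<bar> \<le> \<bar>c - c'\<bar>" using dvd_imp_le_int[OF _ d] by auto
    then show False using assms(4,5) by auto
  qed
qed

lemma upper:
  fixes p k :: nat and B :: "int set"
  assumes pr: "Factorial_Ring.prime p" and pk: "p \<le> 2*k" and kp: "k + 1 < p"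
    and B: "B \<subseteq> {0..int p - 1}" and cB: "k + 1 \<le> card B"
  shows "\<exists>S\<subseteq>B. card S = k \<and> (\<exists>g\<in>S. (\<Sum>S) mod int p = (int k * g) mod int p)"
proof -
  define P where "P = int p"
  define Car where "Car = {0..P - 1}"
  have p1: "p > 1" using pr prime_gt_1_nat by blast
  have k0: "k > 0" using pk p1 by linarith
  obtain B' where B': "B' \<subseteq> B" "card B' = k + 1" "finite B'"
    using obtain_subset_with_card_n[OF cB] by blast
  have B'C: "B' \<subseteq> Car" using B B' by (auto simp: Car_def P_def)
  define \<sigma> where "\<sigma> = \<Sum>B'"
  define g where "g c = (\<sigma> - int k * c) mod P" for c
  have gC: "g c \<in> Car" for c using p1 by (simp add: g_def Car_def P_def)
  have inj: "inj_on g Car"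
  proof (rule inj_onI)
    fix c c' assume c: "c \<in> Car" "c' \<in> Car" "g c = g c'"
    then have "P dvd (\<sigma> - int k * c') - (\<sigma> - int k * c)"
      by (metis g_def mod_eq_dvd_iff)
    then have "P dvd int k * c - int k * c'" by (simp add: algebra_simps)
    then have "(int k * c) mod P = (int k * c') mod P" by (simp add: mod_eq_dvd_iff)
    then show "c = c'" using cancel_mod[OF pr, of "int k" c c'] c k0 kp
      by (auto simp: Car_def P_def)
  qed
  have fC: "finite Car" by (simp add: Car_def)
  have cC: "card Car = p" by (simp add: Car_def P_def)
  have cg: "card (g ` B') = k + 1"
    using card_image[OF inj_on_subset[OF inj B'C]] B' by simp
  have "g ` B' \<union> B' \<subseteq> Car" using gC B'C by auto
  then have "card (g ` B' \<union> B') \<le> p" using card_mono[OF fC] cC by metis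
  moreover have "card (g ` B') + card B' = card (g ` B' \<union> B') + card (g ` B' \<inter> B')"
    using card_Un_Int[of "g ` B'" B'] B' by simp
  ultimately have c2: "card (g ` B' \<inter> B') \<ge> 2" using cg B' pk by linarith
  define D where "D = {c\<in>B'. g c \<in> B'}"
  have "g ` D = g ` B' \<inter> B'" by (auto simp: D_def)
  moreover have "inj_on g D" by (rule inj_on_subset[OF inj]) (use B'C in \<open>auto simp: D_def\<close>)
  ultimately have "card D \<ge> 2" using c2 card_image by metis
  moreover have fD: "finite D" using B' by (simp add: D_def)
  ultimately have "\<not> (\<forall>a\<in>D. \<forall>b\<in>D. a = b)" using card_le_Suc0_iff_eq[OF fD] by linarith
  then obtain c1 c2 where cc: "c1 \<in> D" "c2 \<in> D" "c1 \<noteq> c2" by blast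
  have fix_unique: False if "c1 \<in> D" "c2 \<in> D" "c1 \<noteq> c2" "g c1 = c1" "g c2 = c2" for c1 c2
  proof -
    have m: "(int (k+1) * c) mod P = \<sigma> mod P" if "c \<in> D" "g c = c" for c
    proof -
      have "c = (\<sigma> - int k * c) mod P" using that g_def by simp
      then have "c mod P = (\<sigma> - int k * c) mod P" by (metis mod_mod_trivial)
      then have "P dvd c - (\<sigma> - int k * c)" by (simp add: mod_eq_dvd_iff)
      then have "P dvd int (k+1) * c - \<sigma>" by (simp add: algebra_simps)
      then show ?thesis by (simp add: mod_eq_dvd_iff)
    qed
    have "(int (k+1) * c1) mod P = (int (k+1) * c2) mod P" using m that by simp
    moreover have "c1 \<in> Car" "c2 \<in> Car" using that B'C by (auto simp: D_def)
    ultimately have "c1 = c2" using cancel_mod[OF pr, of "int (k+1)" c1 c2] kp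
      by (auto simp: Car_def P_def)
    then show False using that by simp
  qed
  obtain c where c: "c \<in> D" "g c \<noteq> c" using fix_unique cc by blast
  define b where "b = g c"
  have b: "b \<in> B'" "c \<in> B'" "b \<noteq> c" using c by (auto simp: D_def b_def)
  define S where "S = B' - {b}"
  have "S \<subseteq> B" using B' by (auto simp: S_def)
  moreover have "card S = k" using B' b by (simp add: S_def)
  moreover have "c \<in> S" using b by (auto simp: S_def)
  moreover have "(\<Sum>S) mod P = (int k * c) mod P"
  proof -
    have "\<Sum>S = \<sigma> - b" using B' b by (simp add: S_def \<sigma>_def sum_diff1)
    then have "(\<Sum>S) mod P = (\<sigma> - (\<sigma> - int k * c) mod P) mod P" by (simp add: b_def g_def)
    also have "\<dots> = (\<sigma> - (\<sigma> - int k * c)) mod P" by (simp add: mod_diff_right_eq)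
    finally show ?thesis by simp
  qed
  ultimately show ?thesis unfolding P_def by blast
qed


lemma lower_abstract:
  fixes p m :: nat and C :: "int set" and t g :: int
  assumes pr: "Factorial_Ring.prime p" and C: "C \<subseteq> {0..int p - 1}" and "0 < m" "m < p"
    and t: "t \<in> C" and sC: "\<Sum>C = int m * t" and dv: "int p dvd \<Sum>{0..int p - 1}"
    and g: "g \<in> {0..int p - 1} - C"
  shows "(\<Sum>({0..int p - 1} - C)) mod int p \<noteq> (int (p - m) * g) mod int p"
proof
  define P where "P = int p"
  assume eq: "(\<Sum>({0..int p - 1} - C)) mod int p = (int (p - m) * g) mod int p"
  have "\<Sum>({0..int p - 1} - C) = \<Sum>{0..int p - 1} - \<Sum>C"
    using C by (simp add: sum_diff)
  with eq have "P dvd (\<Sum>{0..P - 1} - int m * t) - (P - int m) * g"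
    using assms by (simp add: mod_eq_dvd_iff P_def of_nat_diff)
  moreover have "P dvd \<Sum>{0..P - 1}" using dv by (simp add: P_def)
  ultimately have "P dvd (\<Sum>{0..P - 1} - int m * t) - (P - int m) * g - \<Sum>{0..P - 1}"
    by (rule dvd_diff)
  then have "P dvd (\<Sum>{0..P - 1} - int m * t) - (P - int m) * g - \<Sum>{0..P - 1} + P * g"
    by (rule dvd_add) simp
  then have "P dvd int m * g - int m * t" by (simp add: algebra_simps)
  then have "(int m * g) mod P = (int m * t) mod P" by (simp add: mod_eq_dvd_iff)
  then have "g = t" using cancel_mod[OF pr, of "int m" g t] assms by (auto simp: P_def)
  then show False using g t by auto
qed

lemma construct:
  fixes p m :: nat
  assumes "3 \<le> m" "2 * m \<le> p"
  shows "\<exists>C t. C \<subseteq> {0..int p - 1} \<and> card C = m \<and> t \<in> C \<and> \<Sum>C = int m * t"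
proof (cases "even m")
  case True
  then obtain r where r: "m = 2 * r" by blast
  define C where "C = {1..2 * int r - 1} \<union> {3 * int r}"
  have s1: "\<Sum>{1..2 * int r - 1} = (2 * int r - 1) * int r"
  proof -
    have "\<Sum>{1..2 * int r - 1} = ((2 * int r - 1) * (2 * int r) - 1 * 0) div 2"
      using Sum_Icc_int[of 1 "2 * int r - 1"] r assms by simp
    also have "\<dots> = (2 * int r - 1) * int r" by simp
    finally show ?thesis .
  qed
  have "C \<subseteq> {0..int p - 1}" using r assms by (auto simp: C_def)
  moreover have "card C = m" using r assms by (simp add: C_def)
  moreover have "int r + 1 \<in> C" using r assms by (auto simp: C_def)
  moreover have "\<Sum>C = int m * (int r + 1)" using r assms s1 by (simp add: C_def algebra_simps)
  ultimately show ?thesis by blast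
next
  case False
  then obtain r where r: "m = 2 * r + 1" using oddE by blast
  define C where "C = {1..2 * int r + 1}"
  have s1: "\<Sum>C = (2 * int r + 1) * (int r + 1)"
  proof -
    have "\<Sum>C = ((2 * int r + 1) * (2 * int r + 2) - 1 * 0) div 2"
      using Sum_Icc_int[of 1 "2 * int r + 1"] by (simp add: C_def algebra_simps)
    also have "\<dots> = (2 * int r + 1) * (int r + 1)" by (simp add: algebra_simps)
    finally show ?thesis .
  qed
  have "C \<subseteq> {0..int p - 1}" using r assms by (auto simp: C_def)
  moreover have "card C = m" using r assms by (simp add: C_def)
  moreover have "int r + 1 \<in> C" using r assms by (auto simp: C_def)
  moreover have "\<Sum>C = int m * (int r + 1)" using r s1 by simp
  ultimately show ?thesis by blast
qed

lemma total_sum: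
  fixes p :: nat
  assumes "odd p"
  shows "int p dvd \<Sum>{0..int p - 1}"
proof -
  obtain q where q: "p = 2 * q + 1" using assms oddE by blast
  have "\<Sum>{0..int p - 1} = ((int p - 1) * int p - 0 * (0 - 1)) div 2"
    using Sum_Icc_int[of 0 "int p - 1"] q by simp
  also have "\<dots> = int q * int p" using q by (simp add: algebra_simps)
  finally show ?thesis by simp
qed


theorem mainTheorem6:
  fixes p k :: nat
  assumes "Factorial_Ring.prime p" and "p \<ge> 7"
    and "(p + 1) div 2 \<le> k" and "k \<le> p - 3"
  shows "barycentric_olson k (add_monoid (residue_ring (int p))) = k + 1"
proof -
  have pr: "Factorial_Ring.prime p" by fact
  have p1: "p > 1" using assms by simp
  have odd: "odd p" using prime_odd_nat[OF pr] assms by simp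
  have pk: "p \<le> 2 * k" using assms(3) by linarith
  have kp: "k + 1 < p" using assms(2,4) by linarith
  define Car where "Car = {0..int p - 1}"
  have carr: "carrier (add_monoid (residue_ring (int p))) = Car"
    by (simp add: residue_ring_def Car_def)
  have kb: "k_barycentric (add_monoid (residue_ring (int p))) k S \<longleftrightarrow>
      S \<subseteq> Car \<and> finite S \<and> card S = k \<and> (\<exists>g\<in>S. (\<Sum>S) mod int p = (int k * g) mod int p)" for S
  proof
    assume h: "k_barycentric (add_monoid (residue_ring (int p))) k S"
    then have S: "S \<subseteq> Car" "finite S" "card S = k" unfolding k_barycentric_def carr by blast+
    from h obtain g where g: "g \<in> S"
      "finprod (add_monoid (residue_ring (int p))) (\<lambda>x. x) S = g [^]\<^bsub>add_monoid (residue_ring (int p))\<^esub> k"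
      by (auto simp: k_barycentric_def)
    have "g \<in> Car" using g S by auto
    then have e2: "g [^]\<^bsub>add_monoid (residue_ring (int p))\<^esub> k = (int k * g) mod int p"
      using res_pow[OF p1] by (simp add: Car_def)
    have e1: "finprod (add_monoid (residue_ring (int p))) (\<lambda>x. x) S = (\<Sum>S) mod int p"
      using res_sum[OF p1] S by (simp add: Car_def)
    show "S \<subseteq> Car \<and> finite S \<and> card S = k \<and> (\<exists>g\<in>S. (\<Sum>S) mod int p = (int k * g) mod int p)"
      using g S e1 e2 by metis
  next
    assume h: "S \<subseteq> Car \<and> finite S \<and> card S = k \<and> (\<exists>g\<in>S. (\<Sum>S) mod int p = (int k * g) mod int p)"
    then obtain g where g: "g \<in> S" "(\<Sum>S) mod int p = (int k * g) mod int p" by blast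
    have "g \<in> Car" using g h by auto
    then have e2: "g [^]\<^bsub>add_monoid (residue_ring (int p))\<^esub> k = (int k * g) mod int p"
      using res_pow[OF p1] by (simp add: Car_def)
    have e1: "finprod (add_monoid (residue_ring (int p))) (\<lambda>x. x) S = (\<Sum>S) mod int p"
      using res_sum[OF p1] h by (simp add: Car_def)
    show "k_barycentric (add_monoid (residue_ring (int p))) k S"
      unfolding k_barycentric_def carr
      using g h e1 e2 by metis
  qed
  define Q where "Q l \<longleftrightarrow> (\<forall>A. A \<subseteq> carrier (add_monoid (residue_ring (int p))) \<and> card A \<ge> l \<longrightarrow>
      (\<exists>S\<subseteq>A. k_barycentric (add_monoid (residue_ring (int p))) k S))" for l
  have Qk: "Q (k + 1)"
    unfolding Q_def
  proof (intro allI impI)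
    fix A assume A: "A \<subseteq> carrier (add_monoid (residue_ring (int p))) \<and> k + 1 \<le> card A"
    then have AC: "A \<subseteq> Car" using carr by simp
    obtain S where S: "S \<subseteq> A" "card S = k" "\<exists>g\<in>S. (\<Sum>S) mod int p = (int k * g) mod int p"
      using upper[OF pr pk kp, of A] AC A by (auto simp: Car_def)
    have "finite S" using S AC finite_subset[of S Car] by (auto simp: Car_def)
    then show "\<exists>S\<subseteq>A. k_barycentric (add_monoid (residue_ring (int p))) k S"
      using S AC kb by blast
  qed
  have notQ: "\<not> Q l" if lk: "l \<le> k" for l
  proof
    assume Ql: "Q l"
    define m where "m = p - k"
    have m3: "3 \<le> m" "2 * m \<le> p" using assms pk by (auto simp: m_def)
    obtain C t where C: "C \<subseteq> Car" "card C = m" "t \<in> C" "\<Sum>C = int m * t"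
      using construct[OF m3] by (auto simp: Car_def)
    define A where "A = Car - C"
    have fC: "finite Car" by (simp add: Car_def)
    have "card A = card Car - card C"
      unfolding A_def by (rule card_Diff_subset[OF finite_subset[OF C(1) fC] C(1)])
    then have cA: "card A = k" using C kp by (simp add: Car_def m_def)
    have AC: "A \<subseteq> carrier (add_monoid (residue_ring (int p)))" unfolding carr A_def by blast
    obtain S where S: "S \<subseteq> A" "k_barycentric (add_monoid (residue_ring (int p))) k S"
    proof -
      have "A \<subseteq> carrier (add_monoid (residue_ring (int p))) \<and> l \<le> card A"
        using AC cA lk by simp
      then have "\<exists>S\<subseteq>A. k_barycentric (add_monoid (residue_ring (int p))) k S"
        using Ql unfolding Q_def by blast
      then show ?thesis using that by blast
    qed
    have Sk: "S \<subseteq> Car \<and> finite S \<and> card S = k \<and> (\<exists>g\<in>S. (\<Sum>S) mod int p = (int k * g) mod int p)"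
      by (rule kb[THEN iffD1, OF S(2)])
    have fA: "finite A" using fC by (simp add: A_def)
    have "S = A" using card_subset_eq[OF fA S(1)] Sk cA by simp
    then obtain g where g: "g \<in> A" "(\<Sum>A) mod int p = (int k * g) mod int p"
      using Sk by blast
    have pm: "p - m = k" using kp by (simp add: m_def)
    have m0: "0 < m" "m < p" using m3 kp by (auto simp: m_def)
    have gg: "g \<in> {0..int p - 1} - C" using g by (simp add: A_def Car_def)
    have C1: "C \<subseteq> {0..int p - 1}" using C(1) by (simp add: Car_def)
    have "(\<Sum>({0..int p - 1} - C)) mod int p \<noteq> (int (p - m) * g) mod int p"
      by (rule lower_abstract[OF pr C1 m0 C(3) C(4) total_sum[OF odd] gg])
    then show False using g(2) pm by (simp add: A_def Car_def)
  qed
  show ?thesis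
    unfolding barycentric_olson_def Q_def[symmetric]
  proof (rule Least_equality)
    show "Q (k + 1)" by (rule Qk)
  next
    fix l assume "Q l"
    then show "k + 1 \<le> l" using notQ[of l] by linarith
  qed
qed

end
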